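(* Let $X\subseteq Y$ be FK-spaces containing $\phi$. Then $E(X)\subseteq E(Y)$ for each of $E=D_p^qS,\ D_p^qW,\ D_p^qF,\ D_p^qF^+,\ D_p^qB,\ D_p^qB^+$.
   Context: An FK-space is a vector subspace of the space $w$ of all complex sequences with a complete metrizable locally convex topology in which coordinate functionals are continuous; $X'$ is its continuous dual. $\delta^j$ has $1$ in position $j$, $0$ elsewhere; $\phi=\operatorname{span}\{\delta^j\}$. $p(n)<q(n)$ are nonnegative integer sequences with $q(n)\to\infty$. For $x\in w$, $x^{(k)}=\sum_{j=1}^kx_j\delta^j$ and $T_n(x)=\frac{1}{q(n)-p(n)}\sum_{k=p(n)+1}^{q(n)}x^{(k)}$. For an FK-space $X\supseteq\phi$: $D_p^qS(X)=\{x\in X: T_n(x)\to x \text{ in } X\}$; $D_p^qW(X)=\{x\in X: f(T_n(x))\to f(x)\ \forall f\in X'\}$; $D_p^qF^+(X)=\{x\in w: \lim_n f(T_n(x))\text{ exists }\forall f\in X'\}$; $D_p^qB^+(X)=\{x\in w:\sup_n|f(T_n(x))|<\infty\ \forall f\in X'\}$; $D_p^qF(X)=D_p^qF^+(X)\cap X$; $D_p^qB(X)=D_p^qB^+(X)\cap X$. *)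

theory Defs
  imports "HOL-Analysis.Analysis"
begin

(* Sequences in w are functions nat => complex; paper index j (>= 1) corresponds to
   Isabelle index j - 1.  An FK-space is represented by its topology T; the space
   itself is topspace T. *)

definition seq_add :: "(nat \<Rightarrow> complex) \<Rightarrow> (nat \<Rightarrow> complex) \<Rightarrow> (nat \<Rightarrow> complex)" where
  "seq_add x y = (\<lambda>i. x i + y i)"

definition seq_scale :: "complex \<Rightarrow> (nat \<Rightarrow> complex) \<Rightarrow> (nat \<Rightarrow> complex)" where
  "seq_scale c x = (\<lambda>i. c * x i)"

definition FK_space :: "(nat \<Rightarrow> complex) topology \<Rightarrow> bool" where
  "FK_space T \<longleftrightarrow>
     (\<lambda>i. 0) \<in> topspace T
   \<and> (\<forall>x\<in>topspace T. \<forall>y\<in>topspace T. seq_add x y \<in> topspace T)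
   \<and> (\<forall>c. \<forall>x\<in>topspace T. seq_scale c x \<in> topspace T)
   \<and> continuous_map (prod_topology T T) T (\<lambda>(x, y). seq_add x y)
   \<and> continuous_map (prod_topology euclidean T) T (\<lambda>(c, x). seq_scale c x)
   \<and> (\<forall>U x. openin T U \<and> x \<in> U \<longrightarrow>
        (\<exists>V. openin T V \<and> x \<in> V \<and> V \<subseteq> U \<and>
             (\<forall>a\<in>V. \<forall>b\<in>V. \<forall>t::real. 0 \<le> t \<and> t \<le> 1 \<longrightarrow>
                (\<lambda>i. complex_of_real t * a i + complex_of_real (1 - t) * b i) \<in> V)))
   \<and> completely_metrizable_space T
   \<and> (\<forall>j. continuous_map T euclidean (\<lambda>x. x j))"

definition FK_dual :: "(nat \<Rightarrow> complex) topology \<Rightarrow> ((nat \<Rightarrow> complex) \<Rightarrow> complex) set" where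
  "FK_dual T = {f. (\<forall>x\<in>topspace T. \<forall>y\<in>topspace T. f (seq_add x y) = f x + f y)
                  \<and> (\<forall>c. \<forall>x\<in>topspace T. f (seq_scale c x) = c * f x)
                  \<and> continuous_map T euclidean f}"

text \<open>phi = span of the unit sequences = finitely supported sequences.\<close>
definition phi :: "(nat \<Rightarrow> complex) set" where
  "phi = {x. finite {i. x i \<noteq> 0}}"

text \<open>k-th section x^(k) (paper coordinates 1..k = Isabelle indices 0..k-1).\<close>
definition sect :: "nat \<Rightarrow> (nat \<Rightarrow> complex) \<Rightarrow> (nat \<Rightarrow> complex)" where
  "sect k x = (\<lambda>i. if i < k then x i else 0)"

definition Tmean :: "(nat \<Rightarrow> nat) \<Rightarrow> (nat \<Rightarrow> nat) \<Rightarrow> nat \<Rightarrow> (nat \<Rightarrow> complex) \<Rightarrow> (nat \<Rightarrow> complex)" where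
  "Tmean p q n x = (\<lambda>i. (\<Sum>k\<in>{p n + 1 .. q n}. sect k x i) / of_nat (q n - p n))"

definition DS :: "(nat \<Rightarrow> nat) \<Rightarrow> (nat \<Rightarrow> nat) \<Rightarrow> (nat \<Rightarrow> complex) topology \<Rightarrow> (nat \<Rightarrow> complex) set" where
  "DS p q T = {x \<in> topspace T. limitin T (\<lambda>n. Tmean p q n x) x sequentially}"

definition DW :: "(nat \<Rightarrow> nat) \<Rightarrow> (nat \<Rightarrow> nat) \<Rightarrow> (nat \<Rightarrow> complex) topology \<Rightarrow> (nat \<Rightarrow> complex) set" where
  "DW p q T = {x \<in> topspace T. \<forall>f\<in>FK_dual T. (\<lambda>n. f (Tmean p q n x)) \<longlonglongrightarrow> f x}"

definition DFplus :: "(nat \<Rightarrow> nat) \<Rightarrow> (nat \<Rightarrow> nat) \<Rightarrow> (nat \<Rightarrow> complex) topology \<Rightarrow> (nat \<Rightarrow> complex) set" where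
  "DFplus p q T = {x. \<forall>f\<in>FK_dual T. convergent (\<lambda>n. f (Tmean p q n x))}"

definition DBplus :: "(nat \<Rightarrow> nat) \<Rightarrow> (nat \<Rightarrow> nat) \<Rightarrow> (nat \<Rightarrow> complex) topology \<Rightarrow> (nat \<Rightarrow> complex) set" where
  "DBplus p q T = {x. \<forall>f\<in>FK_dual T. bounded (range (\<lambda>n. f (Tmean p q n x)))}"

definition DF :: "(nat \<Rightarrow> nat) \<Rightarrow> (nat \<Rightarrow> nat) \<Rightarrow> (nat \<Rightarrow> complex) topology \<Rightarrow> (nat \<Rightarrow> complex) set" where
  "DF p q T = DFplus p q T \<inter> topspace T"

definition DB :: "(nat \<Rightarrow> nat) \<Rightarrow> (nat \<Rightarrow> nat) \<Rightarrow> (nat \<Rightarrow> complex) topology \<Rightarrow> (nat \<Rightarrow> complex) set" where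
  "DB p q T = DBplus p q T \<inter> topspace T"

end

theory Submission
  imports Defs
begin


abbreviation zs :: "nat \<Rightarrow> complex" where "zs \<equiv> (\<lambda>i. 0)"

definition seq_sub :: "(nat \<Rightarrow> complex) \<Rightarrow> (nat \<Rightarrow> complex) \<Rightarrow> (nat \<Rightarrow> complex)" where
  "seq_sub x y = seq_add x (seq_scale (-1) y)"

lemmas alg_defs = seq_add_def seq_scale_def seq_sub_def fun_eq_iff

lemma nbhd_of_cont2:
  assumes "continuous_map (prod_topology X Y) Z g" "openin Z W" "g (a,b) \<in> W"
    "a \<in> topspace X" "b \<in> topspace Y"
  shows "\<exists>U V. openin X U \<and> openin Y V \<and> a \<in> U \<and> b \<in> V \<and> (\<forall>x\<in>U. \<forall>y\<in>V. g (x,y) \<in> W)"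
proof -
  define S where "S = {p \<in> topspace (prod_topology X Y). g p \<in> W}"
  have o: "openin (prod_topology X Y) S"
    unfolding S_def using assms(1,2) by (rule openin_continuous_map_preimage)
  have mem: "(a,b) \<in> S"
    unfolding S_def using assms(3,4,5) by simp
  obtain U V where UV: "openin X U" "openin Y V" "a \<in> U" "b \<in> V" "U \<times> V \<subseteq> S"
    using o[unfolded openin_prod_topology_alt, rule_format, OF mem] by blast
  have "\<forall>x\<in>U. \<forall>y\<in>V. g (x,y) \<in> W"
  proof (intro ballI)
    fix x y assume "x \<in> U" "y \<in> V"
    then have "(x,y) \<in> S" using UV(5) by blast
    then show "g (x,y) \<in> W" unfolding S_def by simp
  qed
  then show ?thesis using UV by blast
qed

context
  fixes T :: "(nat \<Rightarrow> complex) topology"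
  assumes FK: "FK_space T"
begin

lemma FK_D1: "zs \<in> topspace T"
  using FK unfolding FK_space_def by (elim conjE) assumption

lemma FK_D2: "\<forall>x\<in>topspace T. \<forall>y\<in>topspace T. seq_add x y \<in> topspace T"
  using FK unfolding FK_space_def by (elim conjE) assumption

lemma FK_D3: "\<forall>c. \<forall>x\<in>topspace T. seq_scale c x \<in> topspace T"
  using FK unfolding FK_space_def by (elim conjE) assumption

lemma FK_D4: "continuous_map (prod_topology T T) T (\<lambda>(x, y). seq_add x y)"
  using FK unfolding FK_space_def by (elim conjE) assumption

lemma FK_D5: "continuous_map (prod_topology euclidean T) T (\<lambda>(c, x). seq_scale c x)"
  using FK unfolding FK_space_def by (elim conjE) assumption

lemma FK_D6: "completely_metrizable_space T"
  using FK unfolding FK_space_def by (elim conjE) assumption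

lemma FK_D7: "\<forall>j. continuous_map T euclidean (\<lambda>x. x j)"
  using FK unfolding FK_space_def by (elim conjE) assumption

lemmas FK_D = FK_D1 FK_D2 FK_D3 FK_D4 FK_D5 FK_D6 FK_D7


lemma FK_zero: "zs \<in> topspace T"
  by (rule FK_D(1))

lemma FK_add: "x \<in> topspace T \<Longrightarrow> y \<in> topspace T \<Longrightarrow> seq_add x y \<in> topspace T"
  using FK_D(2) by blast

lemma FK_scale: "x \<in> topspace T \<Longrightarrow> seq_scale c x \<in> topspace T"
  using FK_D(3) by blast

lemma FK_sub: "x \<in> topspace T \<Longrightarrow> y \<in> topspace T \<Longrightarrow> seq_sub x y \<in> topspace T"
  unfolding seq_sub_def by (simp add: FK_add FK_scale)

lemma FK_cont_add:
  assumes "continuous_map Z T f" "continuous_map Z T g"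
  shows "continuous_map Z T (\<lambda>z. seq_add (f z) (g z))"
proof -
  have c: "continuous_map (prod_topology T T) T (\<lambda>(x, y). seq_add x y)"
    by (rule FK_D(4))
  have "continuous_map Z T ((\<lambda>(x, y). seq_add x y) \<circ> (\<lambda>z. (f z, g z)))"
    by (rule continuous_map_compose[OF continuous_map_pairedI[OF assms] c])
  then show ?thesis by (simp add: o_def)
qed

lemma FK_cont_scale:
  assumes "continuous_map Z T f"
  shows "continuous_map Z T (\<lambda>z. seq_scale c (f z))"
proof -
  have c: "continuous_map (prod_topology euclidean T) T (\<lambda>(c, x). seq_scale c x)"
    by (rule FK_D(5))
  have "continuous_map Z euclidean (\<lambda>z. c)" by simp
  then have "continuous_map Z T ((\<lambda>(c, x). seq_scale c x) \<circ> (\<lambda>z. (c, f z)))"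
    by (rule continuous_map_compose[OF continuous_map_pairedI[OF _ assms] c])
  then show ?thesis by (simp add: o_def)
qed

lemma FK_cont_sub:
  assumes "continuous_map Z T f" "continuous_map Z T g"
  shows "continuous_map Z T (\<lambda>z. seq_sub (f z) (g z))"
  unfolding seq_sub_def by (intro FK_cont_add FK_cont_scale assms)

lemma FK_cont_scalar_var:
  assumes "x \<in> topspace T"
  shows "continuous_map euclidean T (\<lambda>c. seq_scale c x)"
proof -
  have c: "continuous_map (prod_topology euclidean T) T (\<lambda>(c, x). seq_scale c x)"
    by (rule FK_D(5))
  have "continuous_map euclidean T ((\<lambda>(c, x). seq_scale c x) \<circ> (\<lambda>c. (c, x)))"
    by (rule continuous_map_compose[OF continuous_map_pairedI c]) (use assms in auto)
  then show ?thesis by (simp add: o_def)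
qed

lemma FK_coord: "continuous_map T euclidean (\<lambda>x. x j)"
  using FK_D(7) by blast

lemma FK_const: "a \<in> topspace T \<Longrightarrow> continuous_map Z T (\<lambda>z. a)"
  by simp

lemma FK_nbhd_add:
  assumes "openin T W" "zs \<in> W"
  shows "\<exists>W'. openin T W' \<and> zs \<in> W' \<and> (\<forall>a\<in>W'. \<forall>b\<in>W'. seq_add a b \<in> W)"
proof -
  have c: "continuous_map (prod_topology T T) T (\<lambda>p. seq_add (fst p) (snd p))"
    by (intro FK_cont_add continuous_map_fst continuous_map_snd)
  have "seq_add zs zs = zs" by (simp add: alg_defs)
  then obtain U V where "openin T U" "openin T V" "zs \<in> U" "zs \<in> V"
     "\<forall>x\<in>U. \<forall>y\<in>V. seq_add x y \<in> W"
    using nbhd_of_cont2[OF c assms(1), of zs zs] assms FK_zero by auto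
  then show ?thesis
    by (intro exI[of _ "U \<inter> V"]) auto
qed

lemma FK_absorb:
  assumes "openin T W" "zs \<in> W" "x \<in> topspace T"
  shows "\<exists>n. seq_scale (1 / of_nat (Suc n)) x \<in> W"
proof -
  have "openin euclidean {c \<in> topspace euclidean. seq_scale c x \<in> W}"
    using openin_continuous_map_preimage[OF FK_cont_scalar_var[OF assms(3)] assms(1)] .
  then have o: "open {c. seq_scale c x \<in> W}" by simp
  have "seq_scale 0 x = zs" by (simp add: alg_defs)
  then have "0 \<in> {c. seq_scale c x \<in> W}" using assms by simp
  then obtain e where e: "e > 0" "ball 0 e \<subseteq> {c. seq_scale c x \<in> W}"
    using o open_contains_ball by blast
  obtain n where n: "inverse (real (Suc n)) < e" using e reals_Archimedean by blast
  have "dist 0 (1 / of_nat (Suc n) :: complex) = inverse (real (Suc n))"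
    by (simp only: dist_norm diff_0 norm_minus_cancel norm_divide norm_one norm_of_nat inverse_eq_divide)
  then have "(1 / of_nat (Suc n) :: complex) \<in> ball 0 e"
    using n by simp
  then show ?thesis using e by blast
qed

lemma FK_cauchy_conv:
  assumes u: "\<And>n. u n \<in> topspace T"
    and C: "\<And>W. openin T W \<Longrightarrow> zs \<in> W \<Longrightarrow>
             (\<exists>N. \<forall>m n. N \<le> m \<longrightarrow> m \<le> n \<longrightarrow> seq_sub (u n) (u m) \<in> W)"
  shows "\<exists>t. limitin T u t sequentially"
proof -
  obtain M d where Md: "Metric_space M d" "Metric_space.mcomplete M d"
    "T = Metric_space.mtopology M d"
    using FK_D6 unfolding completely_metrizable_space_def by blast
  interpret Metric_space M d by (rule Md(1))
  have tM: "topspace T = M" using Md by simp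
  define G where "G k = {y \<in> M. \<exists>Op. openin T Op \<and> y \<in> Op \<and> (\<exists>N. \<forall>y'\<in>Op. \<forall>n n'. N \<le> n \<longrightarrow> N \<le> n' \<longrightarrow>
        d (seq_add y' (u n)) (seq_add y' (u n')) < 1 / real (Suc k))}" for k
  have Gopen: "openin T (G k)" for k
  proof (subst openin_subopen, intro ballI)
    fix y assume "y \<in> G k"
    then obtain Op N where Op: "openin T Op" "y \<in> Op" "\<forall>y'\<in>Op. \<forall>n n'. N \<le> n \<longrightarrow> N \<le> n' \<longrightarrow>
        d (seq_add y' (u n)) (seq_add y' (u n')) < 1 / real (Suc k)"
      unfolding G_def by blast
    have "Op \<subseteq> G k"
    proof
      fix y' assume "y' \<in> Op"
      then have "y' \<in> M" using Op(1) openin_subset tM by blast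
      then show "y' \<in> G k" unfolding G_def using Op \<open>y' \<in> Op\<close> by blast
    qed
    then show "\<exists>T'. openin T T' \<and> y \<in> T' \<and> T' \<subseteq> G k" using Op by blast
  qed
  have Gmeets: "\<exists>y\<in>G k. y \<in> Op" if Op: "openin T Op" "y0 \<in> Op" for k Op y0
  proof -
    have y0: "y0 \<in> topspace T" using Op openin_subset by blast
    have ctr: "continuous_map T T (\<lambda>w. seq_add y0 w)"
      by (intro FK_cont_add FK_const y0 continuous_map_id[unfolded id_def])
    define O1 where "O1 = {w \<in> topspace T. seq_add y0 w \<in> Op}"
    have O1: "openin T O1" unfolding O1_def using openin_continuous_map_preimage[OF ctr Op(1)] .
    have cneg: "continuous_map T T (\<lambda>w. seq_scale (-1) w)"
      by (intro FK_cont_scale continuous_map_id[unfolded id_def])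
    define W1 where "W1 = {w \<in> topspace T. seq_scale (-1) w \<in> O1}"
    have W1: "openin T W1" unfolding W1_def using openin_continuous_map_preimage[OF cneg O1] .
    have "seq_add y0 zs = y0" "seq_scale (-1) zs = zs" by (simp_all add: alg_defs)
    then have "zs \<in> W1" unfolding W1_def O1_def using Op FK_zero by simp
    then obtain N1 where N1: "\<forall>m n. N1 \<le> m \<longrightarrow> m \<le> n \<longrightarrow> seq_sub (u n) (u m) \<in> W1"
      using C W1 by blast
    define c where "c = seq_add y0 (u N1)"
    have cM: "c \<in> M" unfolding c_def using FK_add y0 u tM by blast
    define r where "r = 1 / (2 * real (Suc k))"
    have r: "r > 0" unfolding r_def by simp
    have cadd: "continuous_map (prod_topology T T) T (\<lambda>p. seq_add (fst p) (snd p))"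
      by (intro FK_cont_add continuous_map_fst continuous_map_snd)
    have "seq_add c zs = c" by (simp add: alg_defs)
    then have "(\<lambda>p. seq_add (fst p) (snd p)) (c, zs) \<in> mball c r" using cM r by simp
    then obtain U' V' where UV: "openin T U'" "openin T V'" "c \<in> U'" "zs \<in> V'"
      "\<forall>x\<in>U'. \<forall>y\<in>V'. seq_add x y \<in> mball c r"
      using nbhd_of_cont2[OF cadd, of "mball c r" c zs] Md(3) cM tM FK_zero by auto
    obtain N2 where N2: "\<forall>m n. N2 \<le> m \<longrightarrow> m \<le> n \<longrightarrow> seq_sub (u n) (u m) \<in> V'"
      using C UV by blast
    define M' where "M' = max N1 N2"
    define y where "y = seq_add y0 (seq_scale (-1) (seq_sub (u M') (u N1)))"
    have "seq_sub (u M') (u N1) \<in> W1" using N1 unfolding M'_def by simp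
    then have yO: "y \<in> Op" unfolding y_def W1_def O1_def by simp
    have yM: "y \<in> M" using yO Op openin_subset tM by blast
    define O2 where "O2 = {y' \<in> topspace T. seq_add y' (u M') \<in> U'}"
    have ctr2: "continuous_map T T (\<lambda>w. seq_add w (u M'))"
      by (intro FK_cont_add FK_const u continuous_map_id[unfolded id_def])
    have O2: "openin T O2" unfolding O2_def using openin_continuous_map_preimage[OF ctr2 UV(1)] .
    have "seq_add y (u M') = c" unfolding y_def c_def by (simp add: alg_defs)
    then have yO2: "y \<in> O2" unfolding O2_def using yM tM UV by simp
    have "\<forall>y'\<in>O2. \<forall>n n'. M' \<le> n \<longrightarrow> M' \<le> n' \<longrightarrow>
        d (seq_add y' (u n)) (seq_add y' (u n')) < 1 / real (Suc k)"
    proof (intro ballI allI impI)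
      fix y' n n' assume y': "y' \<in> O2" and n: "M' \<le> n" "M' \<le> n'"
      have e: "seq_add y' (u j) = seq_add (seq_add y' (u M')) (seq_sub (u j) (u M'))" for j
        by (simp add: alg_defs)
      have "seq_sub (u j) (u M') \<in> V'" if "M' \<le> j" for j
        using N2 that unfolding M'_def by simp
      then have b: "seq_add y' (u j) \<in> mball c r" if "M' \<le> j" for j
        using UV(5) y' that unfolding O2_def by (metis (no_types, lifting) e mem_Collect_eq)
      have "d (seq_add y' (u n)) (seq_add y' (u n')) \<le> d (seq_add y' (u n)) c + d c (seq_add y' (u n'))"
        using b n triangle by (meson in_mball)
      also have "\<dots> < r + r" using b[OF n(1)] b[OF n(2)] by (simp add: commute add_strict_mono)
      also have "\<dots> = 1 / real (Suc k)" unfolding r_def by (simp add: field_simps)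
      finally show "d (seq_add y' (u n)) (seq_add y' (u n')) < 1 / real (Suc k)" .
    qed
    then have "y \<in> G k" unfolding G_def using yM O2 yO2 by blast
    then show ?thesis using yO by blast
  qed
  have Gdense: "T closure_of (G k) = topspace T" for k
  proof
    show "T closure_of G k \<subseteq> topspace T" by (rule closure_of_subset_topspace)
    show "topspace T \<subseteq> T closure_of G k"
      unfolding in_closure_of subset_iff using Gmeets by blast
  qed
  have "T closure_of \<Inter>(range G) = topspace T"
  proof (rule Baire_category)
    show "completely_metrizable_space T \<or> locally_compact_space T \<and> regular_space T"
      using FK_D6 by blast
  qed (use Gopen Gdense in auto)
  then have "\<Inter>(range G) \<noteq> {}" using FK_zero by auto
  then obtain y where y: "\<And>k. y \<in> G k" by blast
  have yM: "y \<in> M" using y[of 0] unfolding G_def by blast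
  define \<sigma> where "\<sigma> n = seq_add y (u n)" for n
  have "MCauchy \<sigma>"
    unfolding MCauchy_def
  proof (intro conjI allI impI)
    show "range \<sigma> \<subseteq> M" unfolding \<sigma>_def using FK_add yM u tM by auto
    fix \<epsilon> :: real assume "\<epsilon> > 0"
    then obtain k where k: "inverse (real (Suc k)) < \<epsilon>" using reals_Archimedean by blast
    obtain Op N where "y \<in> Op" "\<forall>y'\<in>Op. \<forall>n n'. N \<le> n \<longrightarrow> N \<le> n' \<longrightarrow>
        d (seq_add y' (u n)) (seq_add y' (u n')) < 1 / real (Suc k)"
      using y[of k] unfolding G_def by blast
    then show "\<exists>N. \<forall>n n'. N \<le> n \<longrightarrow> N \<le> n' \<longrightarrow> d (\<sigma> n) (\<sigma> n') < \<epsilon>"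
      unfolding \<sigma>_def using k by (smt (verit, best) inverse_eq_divide)
  qed
  then obtain p where p: "limitin T \<sigma> p sequentially"
    using Md(2,3) unfolding mcomplete_def by blast
  have ctr: "continuous_map T T (\<lambda>w. seq_add w (seq_scale (-1) y))"
    by (intro FK_cont_add FK_const FK_scale continuous_map_id[unfolded id_def]) (use yM tM in auto)
  have "limitin T ((\<lambda>w. seq_add w (seq_scale (-1) y)) \<circ> \<sigma>) (seq_add p (seq_scale (-1) y)) sequentially"
    by (rule continuous_map_limit[OF ctr p])
  moreover have "(\<lambda>w. seq_add w (seq_scale (-1) y)) \<circ> \<sigma> = u"
    unfolding \<sigma>_def by (simp add: alg_defs)
  ultimately show ?thesis by auto
qed

end


lemma FK_almost:
  assumes FKX: "FK_space TX" and FKY: "FK_space TY"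
    and sub: "topspace TX \<subseteq> topspace TY"
    and W: "openin TY W" "zs \<in> W"
  shows "\<exists>U. openin TX U \<and> zs \<in> U \<and> U \<subseteq> TX closure_of (W \<inter> topspace TX)"
proof -
  have csub: "continuous_map (prod_topology TY TY) TY (\<lambda>p. seq_sub (fst p) (snd p))"
    by (intro FK_cont_sub[OF FKY] continuous_map_fst continuous_map_snd)
  have "seq_sub zs zs = zs" by (simp add: alg_defs)
  then obtain U1 V1 where UV1: "openin TY U1" "openin TY V1" "zs \<in> U1" "zs \<in> V1"
     "\<forall>x\<in>U1. \<forall>y\<in>V1. seq_sub x y \<in> W"
    using nbhd_of_cont2[OF csub W(1), of zs zs] W FK_zero[OF FKY] by auto
  define W' where "W' = U1 \<inter> V1"
  have W': "openin TY W'" "zs \<in> W'" "\<forall>a\<in>W'. \<forall>b\<in>W'. seq_sub a b \<in> W"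
    unfolding W'_def using UV1 by auto
  define A where "A n = {x \<in> topspace TX. seq_scale (1 / of_nat (Suc n)) x \<in> W'}" for n
  have cover: "\<exists>n. x \<in> A n" if "x \<in> topspace TX" for x
    using FK_absorb[OF FKY W'(1) W'(2)] that sub unfolding A_def by blast
  have "\<exists>n. TX interior_of (TX closure_of A n) \<noteq> {}"
  proof (rule ccontr)
    assume "\<not> ?thesis"
    then have e: "TX interior_of (TX closure_of A n) = {}" for n by blast
    have "TX interior_of \<Union>(range (\<lambda>n. TX closure_of A n)) = {}"
    proof (rule Baire_category_alt)
      show "completely_metrizable_space TX \<or> locally_compact_space TX \<and> regular_space TX"
        using FK_D6[OF FKX] by blast
    qed (use e in auto)
    moreover have "\<Union>(range (\<lambda>n. TX closure_of A n)) = topspace TX"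
    proof
      show "\<Union>(range (\<lambda>n. TX closure_of A n)) \<subseteq> topspace TX"
        using closure_of_subset_topspace by fast
      show "topspace TX \<subseteq> \<Union>(range (\<lambda>n. TX closure_of A n))"
      proof
        fix x assume x: "x \<in> topspace TX"
        then obtain n where "x \<in> A n" using cover by blast
        moreover have "A n \<subseteq> TX closure_of A n"
          by (rule closure_of_subset) (auto simp: A_def)
        ultimately show "x \<in> \<Union>(range (\<lambda>n. TX closure_of A n))" by blast
      qed
    qed
    ultimately show False using FK_zero[OF FKX] by simp
  qed
  then obtain n a where a: "a \<in> TX interior_of (TX closure_of A n)" by blast
  define Op where "Op = TX interior_of (TX closure_of A n)"
  have Op: "openin TX Op" "a \<in> Op" "Op \<subseteq> TX closure_of A n"
    unfolding Op_def using a interior_of_subset[of TX "TX closure_of A n"] by auto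
  have aX: "a \<in> topspace TX" using Op openin_subset by blast
  define m where "m = (of_nat (Suc n) :: complex)"
  have m0: "m \<noteq> 0" unfolding m_def by (simp only: of_nat_eq_0_iff) 
  define U where "U = {u \<in> topspace TX. seq_add (seq_scale m u) a \<in> Op}"
  have cU: "continuous_map TX TX (\<lambda>u. seq_add (seq_scale m u) a)"
    by (intro FK_cont_add[OF FKX] FK_cont_scale[OF FKX] FK_const[OF FKX] aX continuous_map_id[unfolded id_def])
  have Uo: "openin TX U" unfolding U_def by (rule openin_continuous_map_preimage[OF cU Op(1)])
  have "seq_add (seq_scale m zs) a = a" by (simp add: alg_defs)
  then have U0: "zs \<in> U" unfolding U_def using FK_zero[OF FKX] Op by simp
  have "U \<subseteq> TX closure_of (W \<inter> topspace TX)"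
  proof
    fix u assume u: "u \<in> U"
    define p where "p = seq_add (seq_scale m u) a"
    have pcl: "p \<in> TX closure_of A n" using u Op unfolding U_def p_def by blast
    have acl: "a \<in> TX closure_of A n" using Op by blast
    have uX: "u \<in> topspace TX" using u unfolding U_def by blast
    define h where "h q = seq_scale (1/m) (seq_sub (fst q) (snd q))" for q
    have ch: "continuous_map (prod_topology TX TX) TX h"
      unfolding h_def by (intro FK_cont_scale[OF FKX] FK_cont_sub[OF FKX] continuous_map_fst continuous_map_snd)
    have hpa: "h (p, a) = u" unfolding h_def p_def using m0 by (simp add: alg_defs)
    show "u \<in> TX closure_of (W \<inter> topspace TX)"
      unfolding in_closure_of
    proof (intro conjI allI impI uX)
      fix Q assume Q: "u \<in> Q \<and> openin TX Q"
      have pX: "p \<in> topspace TX" using pcl closure_of_subset_topspace[of TX "A n"] by blast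
      obtain P1 P2 where P: "openin TX P1" "openin TX P2" "p \<in> P1" "a \<in> P2"
        "\<forall>x\<in>P1. \<forall>y\<in>P2. h (x,y) \<in> Q"
        using nbhd_of_cont2[OF ch, of Q p a] Q hpa pX aX by auto
      obtain x1 where x1: "x1 \<in> A n" "x1 \<in> P1" using pcl P unfolding in_closure_of by blast
      obtain x2 where x2: "x2 \<in> A n" "x2 \<in> P2" using acl P unfolding in_closure_of by blast
      have "h (x1, x2) = seq_sub (seq_scale (1 / of_nat (Suc n)) x1) (seq_scale (1 / of_nat (Suc n)) x2)"
        unfolding h_def m_def by (simp add: alg_defs ring_distribs)
      then have "h (x1, x2) \<in> W" using x1 x2 W'(3) unfolding A_def by auto
      moreover have "h (x1, x2) \<in> topspace TX"
        unfolding h_def using x1 x2 unfolding A_def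
        by (simp add: FK_scale[OF FKX] FK_sub[OF FKX])
      moreover have "h (x1, x2) \<in> Q" using P x1 x2 by blast
      ultimately show "\<exists>y. y \<in> W \<inter> topspace TX \<and> y \<in> Q" by blast
    qed
  qed
  then show ?thesis using Uo U0 by blast
qed



lemma FK_incl_nbhd:
  assumes FKX: "FK_space TX" and FKY: "FK_space TY"
    and sub: "topspace TX \<subseteq> topspace TY"
    and V: "openin TY V" "zs \<in> V"
  shows "\<exists>U. openin TX U \<and> zs \<in> U \<and> U \<subseteq> V"
proof -
  obtain MX dX where MX: "Metric_space MX dX" "Metric_space.mcomplete MX dX"
    "TX = Metric_space.mtopology MX dX"
    using FK_D6[OF FKX] unfolding completely_metrizable_space_def by blast
  obtain MY dY where MY: "Metric_space MY dY" "Metric_space.mcomplete MY dY"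
    "TY = Metric_space.mtopology MY dY"
    using FK_D6[OF FKY] unfolding completely_metrizable_space_def by blast
  interpret X: Metric_space MX dX by (rule MX(1))
  interpret Y: Metric_space MY dY by (rule MY(1))
  have tX: "topspace TX = MX" using MX by simp
  have tY: "topspace TY = MY" using MY by simp
  have zX: "zs \<in> MX" using FK_zero[OF FKX] tX by simp
  have zY: "zs \<in> MY" using FK_zero[OF FKY] tY by simp
  have "\<exists>Vs. \<forall>n. (openin TY (Vs n) \<and> zs \<in> Vs n \<and> (n = 0 \<longrightarrow> Vs n = V)) \<and>
      ((\<forall>a\<in>Vs (Suc n). \<forall>b\<in>Vs (Suc n). seq_add a b \<in> Vs n) \<and> Vs (Suc n) \<subseteq> Y.mball zs (1 / real (Suc n)))"
  proof (rule dependent_nat_choice)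
    show "\<exists>x. openin TY x \<and> zs \<in> x \<and> (0 = 0 \<longrightarrow> x = V)" using V by blast
  next
    fix W and n :: nat assume W: "openin TY W \<and> zs \<in> W \<and> (n = 0 \<longrightarrow> W = V)"
    then obtain W1 where W1: "openin TY W1" "zs \<in> W1" "\<forall>a\<in>W1. \<forall>b\<in>W1. seq_add a b \<in> W"
      using FK_nbhd_add[OF FKY] by blast
    define W' where "W' = W1 \<inter> Y.mball zs (1 / real (Suc n))"
    have "openin TY W'" unfolding W'_def using W1 MY(3) by (simp add: openin_Int)
    moreover have "zs \<in> W'" unfolding W'_def using W1 zY by simp
    moreover have "\<forall>a\<in>W'. \<forall>b\<in>W'. seq_add a b \<in> W" using W1 unfolding W'_def by blast
    moreover have "W' \<subseteq> Y.mball zs (1 / real (Suc n))" unfolding W'_def by blast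
    ultimately show "\<exists>y. (openin TY y \<and> zs \<in> y \<and> (Suc n = 0 \<longrightarrow> y = V)) \<and>
       (\<forall>a\<in>y. \<forall>b\<in>y. seq_add a b \<in> W) \<and> y \<subseteq> Y.mball zs (1 / real (Suc n))"
      by blast
  qed
  then obtain Vs where VH: "\<forall>n. (openin TY (Vs n) \<and> zs \<in> Vs n \<and> (n = 0 \<longrightarrow> Vs n = V)) \<and>
      ((\<forall>a\<in>Vs (Suc n). \<forall>b\<in>Vs (Suc n). seq_add a b \<in> Vs n) \<and> Vs (Suc n) \<subseteq> Y.mball zs (1 / real (Suc n)))"
    by (elim exE)
  have Vo: "\<And>n. openin TY (Vs n)" and V0: "\<And>n. zs \<in> Vs n" and VV: "Vs 0 = V"
    and Vadd: "\<And>n a b. a \<in> Vs (Suc n) \<Longrightarrow> b \<in> Vs (Suc n) \<Longrightarrow> seq_add a b \<in> Vs n"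
    and Vball: "\<And>n. Vs (Suc n) \<subseteq> Y.mball zs (1 / real (Suc n))"
    using VH by simp_all
  have "\<forall>n. \<exists>U. openin TX U \<and> zs \<in> U \<and> U \<subseteq> TX closure_of (Vs n \<inter> topspace TX)"
    using FK_almost[OF FKX FKY sub Vo V0] by blast
  then obtain Us where UH: "\<forall>n. openin TX (Us n) \<and> zs \<in> Us n \<and> Us n \<subseteq> TX closure_of (Vs n \<inter> topspace TX)"
    by (rule choice[THEN exE])
  have Uo: "\<And>n. openin TX (Us n)" and U0: "\<And>n. zs \<in> Us n"
    and Ucl: "\<And>n. Us n \<subseteq> TX closure_of (Vs n \<inter> topspace TX)"
    using UH by simp_all
  have "Us 2 \<subseteq> V"
  proof
    fix x assume x: "x \<in> Us 2"
    have xX: "x \<in> topspace TX" using x Uo openin_subset by blast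
    have "\<exists>r. \<forall>n. (r n \<in> Us (n+2) \<and> r n \<in> topspace TX \<and> (n = 0 \<longrightarrow> r n = x)) \<and>
        (seq_sub (r n) (r (Suc n)) \<in> Vs (n+2) \<and> r (Suc n) \<in> X.mball zs (1 / real (Suc n)))"
    proof (rule dependent_nat_choice)
      show "\<exists>y. y \<in> Us (0+2) \<and> y \<in> topspace TX \<and> (0 = 0 \<longrightarrow> y = x)" using x xX by (simp add: numeral_2_eq_2)
    next
      fix y and n :: nat assume y: "y \<in> Us (n+2) \<and> y \<in> topspace TX \<and> (n = 0 \<longrightarrow> y = x)"
      define Ob where "Ob = {a \<in> topspace TX. seq_sub y a \<in> Us (n+3) \<inter> X.mball zs (1 / real (Suc n))}"
      have cs: "continuous_map TX TX (\<lambda>a. seq_sub y a)"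
        using y by (intro FK_cont_sub[OF FKX] FK_const[OF FKX] continuous_map_id[unfolded id_def]) auto
      have "openin TX (Us (n+3) \<inter> X.mball zs (1 / real (Suc n)))"
        using Uo MX(3) by (simp add: openin_Int)
      then have Obo: "openin TX Ob" unfolding Ob_def by (rule openin_continuous_map_preimage[OF cs])
      have "seq_sub y y = zs" by (simp add: alg_defs)
      then have "y \<in> Ob" unfolding Ob_def using y U0 zX by simp
      moreover have "y \<in> TX closure_of (Vs (n+2) \<inter> topspace TX)" using y Ucl[of "n+2"] by blast
      ultimately obtain v where v: "v \<in> Vs (n+2) \<inter> topspace TX" "v \<in> Ob"
        using Obo unfolding in_closure_of by blast
      define y' where "y' = seq_sub y v"
      have "seq_sub y y' = v" unfolding y'_def by (simp add: alg_defs)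
      moreover have "y' \<in> Us (Suc n + 2)" "y' \<in> X.mball zs (1 / real (Suc n))"
        using v unfolding Ob_def y'_def by (simp_all add: numeral_3_eq_3)
      moreover have "y' \<in> topspace TX" unfolding y'_def using y v by (simp add: FK_sub[OF FKX])
      ultimately show "\<exists>y'. (y' \<in> Us (Suc n + 2) \<and> y' \<in> topspace TX \<and> (Suc n = 0 \<longrightarrow> y' = x)) \<and>
        (seq_sub y y' \<in> Vs (n+2) \<and> y' \<in> X.mball zs (1 / real (Suc n)))"
        using v by auto
    qed
    then obtain r where RH: "\<forall>n. (r n \<in> Us (n+2) \<and> r n \<in> topspace TX \<and> (n = 0 \<longrightarrow> r n = x)) \<and>
        (seq_sub (r n) (r (Suc n)) \<in> Vs (n+2) \<and> r (Suc n) \<in> X.mball zs (1 / real (Suc n)))"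
      by (elim exE)
    have rX: "\<And>n. r n \<in> topspace TX" and r0: "r 0 = x"
      and rV: "\<And>n. seq_sub (r n) (r (Suc n)) \<in> Vs (n+2)"
      and rb: "\<And>n. r (Suc n) \<in> X.mball zs (1 / real (Suc n))"
      using RH by simp_all
    have claim: "\<forall>w\<in>Vs (m+k+1). seq_add (seq_sub (r m) (r (m+k))) w \<in> Vs (m+1)" for m k
    proof (induction k)
      case 0
      have "seq_add (seq_sub (r m) (r m)) w = w" for w by (simp add: alg_defs)
      then show ?case by simp
    next
      case (Suc k)
      show ?case
      proof
        fix w assume w: "w \<in> Vs (m + Suc k + 1)"
        have e2: "m+k+2 = Suc (m+k+1)" by simp
        have v: "seq_sub (r (m+k)) (r (Suc (m+k))) \<in> Vs (Suc (m+k+1))"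
          using rV[of "m+k"] unfolding e2 .
        have e3: "m + Suc k + 1 = Suc (m+k+1)" by simp
        have w': "w \<in> Vs (Suc (m+k+1))" using w unfolding e3 .
        have "seq_add (seq_sub (r (m+k)) (r (Suc (m+k)))) w \<in> Vs (m+k+1)"
          by (rule Vadd[OF v w'])
        then have "seq_add (seq_sub (r m) (r (m+k))) (seq_add (seq_sub (r (m+k)) (r (Suc (m+k)))) w) \<in> Vs (m+1)"
          by (rule bspec[OF Suc.IH])
        moreover have "seq_add (seq_sub (r m) (r (m+k))) (seq_add (seq_sub (r (m+k)) (r (Suc (m+k)))) w)
            = seq_add (seq_sub (r m) (r (m + Suc k))) w"
          by (simp add: alg_defs)
        ultimately show "seq_add (seq_sub (r m) (r (m + Suc k))) w \<in> Vs (m+1)" by simp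
      qed
    qed
    have cor: "seq_sub (r m) (r n) \<in> Vs (m+1)" if "m \<le> n" for m n
    proof -
      define k where "k = n - m"
      have k: "n = m + k" using that unfolding k_def by simp
      have "seq_add (seq_sub (r m) (r (m+k))) zs \<in> Vs (m+1)" by (rule bspec[OF claim[of m k] V0[of "m+k+1"]])
      then have "seq_add (seq_sub (r m) (r n)) zs \<in> Vs (m+1)" unfolding k .
      moreover have "seq_add (seq_sub (r m) (r n)) zs = seq_sub (r m) (r n)" by (simp add: alg_defs)
      ultimately show ?thesis by simp
    qed
    define s where "s n = seq_sub x (r n)" for n
    have sX: "s n \<in> topspace TX" for n unfolding s_def using xX rX by (simp add: FK_sub[OF FKX])
    have sY: "s n \<in> topspace TY" for n using sX sub by blast
    have "\<exists>t. limitin TY s t sequentially"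
    proof (rule FK_cauchy_conv[OF FKY sY])
      fix W assume W: "openin TY W" "zs \<in> W"
      have "openin Y.mtopology W" using W(1) MY(3) by simp
      then obtain \<epsilon> where e: "\<epsilon> > 0" "Y.mball zs \<epsilon> \<subseteq> W"
        using Y.openin_mtopology[THEN iffD1, THEN conjunct2, rule_format, OF _ W(2)] by auto
      obtain N where N: "inverse (real (Suc N)) < \<epsilon>" using e reals_Archimedean by blast
      have "seq_sub (s n) (s m) \<in> W" if "N \<le> m" "m \<le> n" for m n
      proof -
        have "seq_sub (s n) (s m) = seq_sub (r m) (r n)" unfolding s_def by (simp add: alg_defs)
        moreover have "seq_sub (r m) (r n) \<in> Y.mball zs (1 / real (Suc m))"
          using cor[OF that(2)] Vball[of m] by auto
        moreover have "1 / real (Suc m) \<le> \<epsilon>"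
        proof -
          have "1 / real (Suc m) \<le> 1 / real (Suc N)" using that(1) by (simp add: frac_le)
          then show ?thesis using N by (simp add: inverse_eq_divide)
        qed
        ultimately show ?thesis using e(2) Y.mball_subset_concentric[of "1 / real (Suc m)" \<epsilon> zs] by auto
      qed
      then show "\<exists>N. \<forall>m n. N \<le> m \<longrightarrow> m \<le> n \<longrightarrow> seq_sub (s n) (s m) \<in> W" by blast
    qed
    then obtain t where t: "limitin TY s t sequentially" by blast
    have r0lim: "limitin TX r zs sequentially"
      unfolding MX(3) X.limitin_metric
    proof (intro conjI allI impI zX)
      fix \<epsilon> :: real assume e: "\<epsilon> > 0"
      obtain N where N: "inverse (real (Suc N)) < \<epsilon>" using e reals_Archimedean by blast
      have "r n \<in> MX \<and> dX (r n) zs < \<epsilon>" if "Suc N \<le> n" for n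
      proof -
        define k where "k = n - 1"
        have k: "n = Suc k" using that unfolding k_def by simp
        have "N \<le> k" using that k by simp
        then have "1 / real (Suc k) \<le> 1 / real (Suc N)" by (simp add: frac_le)
        moreover have "dX zs (r n) < 1 / real (Suc k)" using rb[of k] k by simp
        moreover have "r n \<in> MX" using rX tX by simp
        ultimately show ?thesis using N X.commute by (simp add: inverse_eq_divide)
      qed
      then show "\<forall>\<^sub>F n in sequentially. r n \<in> MX \<and> dX (r n) zs < \<epsilon>"
        unfolding eventually_sequentially by blast
    qed
    have csx: "continuous_map TX TX (\<lambda>a. seq_sub x a)"
      using xX by (intro FK_cont_sub[OF FKX] FK_const[OF FKX] continuous_map_id[unfolded id_def]) auto
    have "limitin TX ((\<lambda>a. seq_sub x a) \<circ> r) (seq_sub x zs) sequentially"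
      by (rule continuous_map_limit[OF csx r0lim])
    moreover have "seq_sub x zs = x" by (simp add: alg_defs)
    ultimately have sxlim: "limitin TX s x sequentially" unfolding s_def o_def by simp
    have "t = x"
    proof
      fix j
      have "limitin euclidean ((\<lambda>a. a j) \<circ> s) (x j) sequentially"
        by (rule continuous_map_limit[OF FK_coord[OF FKX] sxlim])
      moreover have "limitin euclidean ((\<lambda>a. a j) \<circ> s) (t j) sequentially"
        by (rule continuous_map_limit[OF FK_coord[OF FKY] t])
      ultimately show "t j = x j" by (simp add: LIMSEQ_unique)
    qed
    have xY: "x \<in> topspace TY" using xX sub by blast
    have csy: "continuous_map TY TY (\<lambda>a. seq_sub x a)"
      using xY by (intro FK_cont_sub[OF FKY] FK_const[OF FKY] continuous_map_id[unfolded id_def]) auto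
    have "limitin TY ((\<lambda>a. seq_sub x a) \<circ> s) (seq_sub x x) sequentially"
      using continuous_map_limit[OF csy t] \<open>t = x\<close> by simp
    moreover have "(\<lambda>a. seq_sub x a) \<circ> s = r" unfolding s_def by (simp add: alg_defs)
    moreover have "seq_sub x x = zs" by (simp add: alg_defs)
    ultimately have "limitin TY r zs sequentially" by simp
    then have "\<exists>N. \<forall>n. N \<le> n \<longrightarrow> r n \<in> Vs 2"
      unfolding limitin_sequentially using Vo[of 2] V0[of 2] by auto
    then obtain N where N: "\<And>n. N \<le> n \<Longrightarrow> r n \<in> Vs 2" by auto
    have sN: "s N \<in> Vs (Suc 0)" using cor[of 0 N] r0 unfolding s_def by simp
    have rN: "r N \<in> Vs (Suc 0)"
    proof -
      have a1: "r N \<in> Vs (Suc 1)" using N[of N] by (simp add: numeral_2_eq_2)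
      have "seq_add (r N) zs \<in> Vs 1" by (rule Vadd[OF a1 V0])
      moreover have "seq_add (r N) zs = r N" by (simp add: alg_defs)
      ultimately show ?thesis by simp
    qed
    have "seq_add (s N) (r N) \<in> Vs 0" by (rule Vadd[OF sN rN])
    moreover have "seq_add (s N) (r N) = x" unfolding s_def by (simp add: alg_defs)
    ultimately show "x \<in> V" using VV by simp
  qed
  then show ?thesis using Uo U0 by blast
qed


lemma FK_incl_cont:
  assumes FKX: "FK_space TX" and FKY: "FK_space TY"
    and sub: "topspace TX \<subseteq> topspace TY"
  shows "continuous_map TX TY (\<lambda>x. x)"
  unfolding continuous_map_def
proof (intro conjI allI impI)
  show "(\<lambda>x. x) \<in> topspace TX \<rightarrow> topspace TY" using sub by blast
  fix U assume U: "openin TY U"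
  show "openin TX {x \<in> topspace TX. x \<in> U}"
  proof (subst openin_subopen, intro ballI)
    fix x0 assume x0: "x0 \<in> {x \<in> topspace TX. x \<in> U}"
    then have x0X: "x0 \<in> topspace TX" and x0U: "x0 \<in> U" by auto
    have x0Y: "x0 \<in> topspace TY" using x0X sub by blast
    have ct: "continuous_map TY TY (\<lambda>v. seq_add v x0)"
      using x0Y by (intro FK_cont_add[OF FKY] FK_const[OF FKY] continuous_map_id[unfolded id_def]) auto
    define V where "V = {v \<in> topspace TY. seq_add v x0 \<in> U}"
    have Vo: "openin TY V" unfolding V_def by (rule openin_continuous_map_preimage[OF ct U])
    have "seq_add zs x0 = x0" by (simp add: alg_defs)
    then have V0: "zs \<in> V" unfolding V_def using FK_zero[OF FKY] x0U by simp
    obtain U0 where U0: "openin TX U0" "zs \<in> U0" "U0 \<subseteq> V"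
      using FK_incl_nbhd[OF FKX FKY sub Vo V0] by blast
    have cs: "continuous_map TX TX (\<lambda>u. seq_sub u x0)"
      using x0X by (intro FK_cont_sub[OF FKX] FK_const[OF FKX] continuous_map_id[unfolded id_def]) auto
    define S where "S = {u \<in> topspace TX. seq_sub u x0 \<in> U0}"
    have So: "openin TX S" unfolding S_def by (rule openin_continuous_map_preimage[OF cs U0(1)])
    have "seq_sub x0 x0 = zs" by (simp add: alg_defs)
    then have "x0 \<in> S" unfolding S_def using x0X U0 by simp
    moreover have "S \<subseteq> {x \<in> topspace TX. x \<in> U}"
    proof
      fix u assume u: "u \<in> S"
      then have "seq_sub u x0 \<in> V" using U0 unfolding S_def by blast
      then have "seq_add (seq_sub u x0) x0 \<in> U" unfolding V_def by blast
      moreover have "seq_add (seq_sub u x0) x0 = u" by (simp add: alg_defs)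
      ultimately show "u \<in> {x \<in> topspace TX. x \<in> U}" using u unfolding S_def by simp
    qed
    ultimately show "\<exists>T. openin TX T \<and> x0 \<in> T \<and> T \<subseteq> {x \<in> topspace TX. x \<in> U}"
      using So by blast
  qed
qed

theorem mainTheorem7:
  fixes p q :: "nat \<Rightarrow> nat" and TX TY :: "(nat \<Rightarrow> complex) topology"
  assumes "\<And>n. p n < q n"
    and "filterlim q at_top sequentially"
    and "FK_space TX" and "FK_space TY"
    and "topspace TX \<subseteq> topspace TY"
    and "phi \<subseteq> topspace TX"
  shows "DS p q TX \<subseteq> DS p q TY \<and> DW p q TX \<subseteq> DW p q TY
       \<and> DF p q TX \<subseteq> DF p q TY \<and> DFplus p q TX \<subseteq> DFplus p q TY
       \<and> DB p q TX \<subseteq> DB p q TY \<and> DBplus p q TX \<subseteq> DBplus p q TY"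
proof -
  have cont: "continuous_map TX TY (\<lambda>x. x)"
    by (rule FK_incl_cont[OF assms(3,4,5)])
  have sub: "topspace TX \<subseteq> topspace TY" by (rule assms(5))
  have dual: "FK_dual TY \<subseteq> FK_dual TX"
  proof
    fix f assume f: "f \<in> FK_dual TY"
    have "continuous_map TX euclidean ((\<lambda>x. f x) \<circ> (\<lambda>x. x))"
      by (rule continuous_map_compose[OF cont]) (use f in \<open>simp add: FK_dual_def\<close>)
    then have "continuous_map TX euclidean f" by (simp add: o_def)
    then show "f \<in> FK_dual TX" using f sub unfolding FK_dual_def by blast
  qed
  have DS: "DS p q TX \<subseteq> DS p q TY"
  proof
    fix x assume x: "x \<in> DS p q TX"
    then have "limitin TX (\<lambda>n. Tmean p q n x) x sequentially" unfolding DS_def by blast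
    from continuous_map_limit[OF cont this]
    have "limitin TY (\<lambda>n. Tmean p q n x) x sequentially" by (simp add: o_def)
    then show "x \<in> DS p q TY" using x sub unfolding DS_def by blast
  qed
  have DW: "DW p q TX \<subseteq> DW p q TY"
    using dual sub unfolding DW_def by blast
  have DFp: "DFplus p q TX \<subseteq> DFplus p q TY"
    using dual unfolding DFplus_def by blast
  have DBp: "DBplus p q TX \<subseteq> DBplus p q TY"
    using dual unfolding DBplus_def by blast
  have DF: "DF p q TX \<subseteq> DF p q TY"
    using DFp sub unfolding DF_def by blast
  have DB: "DB p q TX \<subseteq> DB p q TY"
    using DBp sub unfolding DB_def by blast
  show ?thesis using DS DW DFp DBp DF DB by blast
qed


end
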